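(* Let $u\in\Lambda$ and $(h,\beta)\in\Gamma(u)$. Then for every $j\in\mathbb N$, $\mathbf K^s_u\le\lfloor\mathfrak F_u(j,h,\beta)\rfloor$ (with $\lfloor+\infty\rfloor=+\infty$). Moreover, if $\mathcal S(u,h)\neq\emptyset$, then $\min_{k\in\mathcal S(u,h)}\mathfrak F_u(k,h,\beta)=\mathfrak F_u(\mathbf K^s_u,h,\beta)$.
   Context: $\Lambda$: real sequences with $\sup_n u_n<+\infty$. $\Delta^s_u=\{k:\max_{0\le j\le k}u_j>\sup_{j>k}u_j\}$, $\mathbf K^s_u=\inf\Delta^s_u$ ($\inf\emptyset=+\infty$). $\Omega([0,1])$: functions $h:\mathbb R\to\mathbb R$ whose restriction to $[0,1]$ is strictly increasing and continuous; $h^{-1}_{[0,1]}$ the inverse of that restriction. $\Gamma(u)=\{(h,\beta)\in\Omega([0,1])\times(0,1):u_k\le h(\beta^k)\ \forall k\}$; $\mathcal S(u,h)=\{k:u_k>h(0)\}$. $\mathfrak F_u(k,h,\beta)=\ln(h^{-1}_{[0,1]}(u_k))/\ln\beta$ if $(h,\beta)\in\Gamma(u)$ and $k\in\mathcal S(u,h)$, and $+\infty$ otherwise. *)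

theory Defs
  imports "HOL-Analysis.Analysis" "HOL-Library.Extended_Nat" "HOL-Library.Extended_Real"
begin

definition Lambda :: "(nat \<Rightarrow> real) set" where
  "Lambda = {u. bdd_above (range u)}"

definition DeltaS :: "(nat \<Rightarrow> real) \<Rightarrow> nat set" where
  "DeltaS u = {k. Max (u ` {..k}) > Sup (u ` {k<..})}"

(* K^s_u = inf Delta^s_u, with inf {} = +infinity *)
definition KS :: "(nat \<Rightarrow> real) \<Rightarrow> enat" where
  "KS u = Inf (enat ` DeltaS u)"

definition Omega01 :: "(real \<Rightarrow> real) set" where
  "Omega01 = {h. strict_mono_on {0..1} h \<and> continuous_on {0..1} h}"

definition hinv01 :: "(real \<Rightarrow> real) \<Rightarrow> real \<Rightarrow> real" where
  "hinv01 h y = the_inv_into {0..1} h y"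

definition Gamma :: "(nat \<Rightarrow> real) \<Rightarrow> ((real \<Rightarrow> real) \<times> real) set" where
  "Gamma u = {(h, \<beta>). h \<in> Omega01 \<and> \<beta> \<in> {0<..<1} \<and> (\<forall>k. u k \<le> h (\<beta> ^ k))}"

definition SS :: "(nat \<Rightarrow> real) \<Rightarrow> (real \<Rightarrow> real) \<Rightarrow> nat set" where
  "SS u h = {k. u k > h 0}"

definition FF :: "(nat \<Rightarrow> real) \<Rightarrow> nat \<Rightarrow> (real \<Rightarrow> real) \<Rightarrow> real \<Rightarrow> ereal" where
  "FF u k h \<beta> = (if (h, \<beta>) \<in> Gamma u \<and> k \<in> SS u h
      then ereal (ln (hinv01 h (u k)) / ln \<beta>) else \<infinity>)"

definition efloor :: "ereal \<Rightarrow> ereal" where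
  "efloor x = (case x of ereal r \<Rightarrow> ereal (of_int \<lfloor>r\<rfloor>) | PInfty \<Rightarrow> \<infinity> | MInfty \<Rightarrow> -\<infinity>)"

end

theory Submission
  imports Defs
begin

lemma hmono:
  assumes "h \<in> Omega01" "x \<in> {0..1}" "y \<in> {0..1}" "x \<le> y"
  shows "h x \<le> h y"
proof (cases "x = y")
  case False
  with assms have "x < y" by auto
  with assms show ?thesis unfolding Omega01_def strict_mono_on_def by fastforce
qed simp

lemma hstrict:
  assumes "h \<in> Omega01" "x \<in> {0..1}" "y \<in> {0..1}" "x < y"
  shows "h x < h y"
  using assms unfolding Omega01_def strict_mono_on_def by fastforce

lemma hinv_props:
  assumes h: "h \<in> Omega01" and b: "0 < b" "b \<le> 1" and y: "h 0 < y" "y \<le> h b"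
  shows "0 < hinv01 h y \<and> hinv01 h y \<le> b \<and> h (hinv01 h y) = y"
proof -
  have c: "continuous_on {0..b} h"
    using h b unfolding Omega01_def by (auto intro: continuous_on_subset)
  obtain t where t: "0 \<le> t" "t \<le> b" "h t = y"
    using IVT'[of h 0 y b, OF _ y(2) _ c] y b by auto
  have "t \<noteq> 0" using t y by auto
  have inj: "inj_on h {0..1}"
    using h unfolding Omega01_def by (auto intro: strict_mono_on_imp_inj_on)
  have "hinv01 h y = t" unfolding hinv01_def using the_inv_into_f_f[OF inj, of t] t b by auto
  thus ?thesis using t \<open>t \<noteq> 0\<close> by auto
qed

lemma hinv_mono:
  assumes h: "h \<in> Omega01" and b: "0 < b" "b \<le> 1" "0 < c" "c \<le> 1"
    and y: "h 0 < y" "y \<le> h b" "h 0 < z" "z \<le> h c" "y \<le> z"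
  shows "hinv01 h y \<le> hinv01 h z"
proof (rule ccontr)
  assume "\<not> ?thesis"
  moreover have A: "0 < hinv01 h y \<and> hinv01 h y \<le> b \<and> h (hinv01 h y) = y"
    by (rule hinv_props[OF h b(1,2) y(1,2)])
  moreover have B: "0 < hinv01 h z \<and> hinv01 h z \<le> c \<and> h (hinv01 h z) = z"
    by (rule hinv_props[OF h b(3,4) y(3,4)])
  ultimately have "h (hinv01 h z) < h (hinv01 h y)"
    using hstrict[OF h, of "hinv01 h z" "hinv01 h y"] b by auto
  thus False using A B y by auto
qed

lemma part1:
  fixes u :: "nat \<Rightarrow> real" and h :: "real \<Rightarrow> real" and \<beta> :: real
  assumes L: "u \<in> Lambda" and G: "(h, \<beta>) \<in> Gamma u" and j: "j \<in> SS u h"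
  defines "F \<equiv> ln (hinv01 h (u j)) / ln \<beta>"
  shows "F \<ge> j \<and> nat \<lfloor>F\<rfloor> \<in> DeltaS u"
proof -
  have h: "h \<in> Omega01" and b: "0 < \<beta>" "\<beta> < 1" and ub: "\<And>k. u k \<le> h (\<beta> ^ k)"
    using G unfolding Gamma_def by auto
  have uj: "h 0 < u j" using j unfolding SS_def by auto
  have bj: "0 < \<beta>^j" "\<beta>^j \<le> 1" using b by (auto simp: power_le_one)
  define t where "t = hinv01 h (u j)"
  have t: "0 < t" "t \<le> \<beta>^j" "h t = u j"
    using hinv_props[OF h bj uj ub[of j]] unfolding t_def by auto
  have lnb: "ln \<beta> < 0" using b by simp
  have "ln t \<le> ln (\<beta>^j)" using t by simp
  also have "\<dots> = j * ln \<beta>" using b by (simp add: ln_realpow)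
  finally have "ln t \<le> j * ln \<beta>" .
  hence Fj: "F \<ge> j" unfolding F_def t_def[symmetric] using lnb by (simp add: le_divide_eq)
  define N where "N = nat \<lfloor>F\<rfloor>"
  have FN: "real N = of_int \<lfloor>F\<rfloor>" unfolding N_def using Fj by simp
  have "int j \<le> \<lfloor>F\<rfloor>" using Fj by (simp add: le_floor_iff)
  hence jN: "j \<le> N" unfolding N_def by linarith
  have "F < real (N+1)" using FN by linarith
  hence "real (N+1) * ln \<beta> < ln t" unfolding F_def t_def[symmetric] using lnb
    by (simp add: divide_less_eq mult.commute)
  moreover have "ln (\<beta>^(N+1)) = real (N+1) * ln \<beta>" using b by (simp only: ln_realpow)
  ultimately have "ln (\<beta>^(N+1)) < ln t" by simp
  hence bN: "\<beta>^(N+1) < t" using b t by (simp add: ln_less_cancel_iff)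
  have "\<beta>^(N+1) \<le> 1" using b by (intro power_le_one) auto
  hence bN1: "\<beta>^(N+1) \<in> {0..1}" using b by auto
  have t01: "t \<in> {0..1}" using t bj by auto
  have hlt: "h (\<beta>^(N+1)) < u j" using hstrict[OF h bN1 t01 bN] t by simp
  have bnd: "u i \<le> h (\<beta>^(N+1))" if "i \<in> {N<..}" for i
  proof -
    have "\<beta>^i \<le> \<beta>^(N+1)" using that b by (intro power_decreasing) auto
    moreover have "\<beta>^i \<in> {0..1}" using b by (auto simp: power_le_one)
    ultimately have "h (\<beta>^i) \<le> h (\<beta>^(N+1))" using hmono[OF h _ bN1] by blast
    thus ?thesis using ub[of i] by linarith
  qed
  have "Sup (u ` {N<..}) \<le> h (\<beta>^(N+1))"
    by (rule cSUP_least) (simp, rule bnd, simp)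
  also have "\<dots> < u j" by (rule hlt)
  also have "u j \<le> Max (u ` {..N})" using jN by (intro Max_ge) auto
  finally have "N \<in> DeltaS u" unfolding DeltaS_def by simp
  thus ?thesis using Fj N_def by simp
qed

lemma KS_least:
  assumes "D \<noteq> {}" "DeltaS u = D"
  shows "KS u = enat (LEAST k. k \<in> D)"
proof -
  have m: "(LEAST k. k \<in> D) \<in> D" using assms(1) by (auto intro: LeastI)
  show ?thesis unfolding KS_def assms(2)
  proof (rule antisym)
    show "Inf (enat ` D) \<le> enat (LEAST k. k \<in> D)" using m by (auto intro: Inf_lower)
    show "enat (LEAST k. k \<in> D) \<le> Inf (enat ` D)"
      by (rule Inf_greatest) (auto intro: Least_le)
  qed
qed

lemma part2:
  fixes u :: "nat \<Rightarrow> real"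
  assumes L: "u \<in> Lambda" and k: "k \<in> DeltaS u" and least: "\<And>i. i \<in> DeltaS u \<Longrightarrow> k \<le> i"
  shows "\<forall>j. u j \<le> u k"
proof -
  have r: "bdd_above (range u)" using L unfolding Lambda_def by simp
  have bdd: "bdd_above (u ` A)" for A
    by (rule bdd_above_mono[OF r]) (rule image_mono, simp)
  define M where "M = Max (u ` {..k})"
  define S where "S = Sup (u ` {k<..})"
  have MS: "S < M" using k unfolding DeltaS_def M_def S_def by simp
  have Sge: "u i \<le> S" if "k < i" for i unfolding S_def
    using that by (intro cSUP_upper bdd) auto
  have "M \<in> u ` {..k}" unfolding M_def by (rule Max_in) auto
  then obtain i1 where i1: "i1 \<le> k" "u i1 = M" by auto
  define I where "I = {i. i \<le> k \<and> u i = M}"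
  have finI: "finite I" unfolding I_def by auto
  have "i1 \<in> I" using i1 unfolding I_def by auto
  define i0 where "i0 = Max I"
  have i0: "i0 \<in> I" unfolding i0_def using finI \<open>i1 \<in> I\<close> by (intro Max_in) auto
  have i0ge: "i \<le> i0" if "i \<in> I" for i unfolding i0_def using finI that by simp
  have Mge: "u i \<le> M" if "i \<le> k" for i unfolding M_def using that by (intro Max_ge) auto
  have ui0: "u i0 = M" "i0 \<le> k" using i0 unfolding I_def by auto
  define c where "c = Max (insert S (u ` {i0<..k}))"
  have cM: "c < M" unfolding c_def
  proof (subst Max_less_iff)
    show "\<forall>a\<in>insert S (u ` {i0<..k}). a < M"
    proof
      fix a assume "a \<in> insert S (u ` {i0<..k})"
      then consider "a = S" | i where "i0 < i" "i \<le> k" "a = u i" by auto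
      then show "a < M"
      proof cases
        case 1 thus ?thesis using MS by simp
      next
        case 2
        have "u i \<noteq> M" using 2 i0ge[of i] unfolding I_def by auto
        thus ?thesis using 2 Mge[of i] by simp
      qed
    qed
  qed auto
  have cge: "u i \<le> c" if "i0 < i" for i
  proof (cases "i \<le> k")
    case True
    thus ?thesis unfolding c_def using that by (intro Max_ge) auto
  next
    case False
    hence "u i \<le> S" using Sge by simp
    moreover have "S \<le> c" unfolding c_def by (rule Max_ge) auto
    ultimately show ?thesis by linarith
  qed
  have "Sup (u ` {i0<..}) \<le> c" by (rule cSUP_least) (simp, rule cge, simp)
  also have "c < M" by (rule cM)
  also have "M \<le> Max (u ` {..i0})" using ui0 by (intro Max_ge) (auto intro: image_eqI[of _ _ i0])
  finally have "i0 \<in> DeltaS u" unfolding DeltaS_def by simp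
  hence "i0 = k" using least[of i0] ui0 by simp
  hence uk: "u k = M" using ui0 by simp
  show ?thesis
  proof
    fix j show "u j \<le> u k"
      using Mge[of j] Sge[of j] MS uk by (cases "j \<le> k") auto
  qed
qed

theorem mainTheorem6:
  fixes u :: "nat \<Rightarrow> real" and h :: "real \<Rightarrow> real" and \<beta> :: real
  assumes "u \<in> Lambda" and "(h, \<beta>) \<in> Gamma u"
  shows "(\<forall>j::nat. ereal_of_enat (KS u) \<le> efloor (FF u j h \<beta>))
       \<and> (SS u h \<noteq> {} \<longrightarrow>
            (\<exists>k. KS u = enat k \<and>
               (\<exists>m\<in>SS u h. FF u m h \<beta> = FF u k h \<beta> \<and> (\<forall>j\<in>SS u h. FF u m h \<beta> \<le> FF u j h \<beta>))))"
proof
  have h: "h \<in> Omega01" and b: "0 < \<beta>" "\<beta> < 1" and ub: "\<And>k. u k \<le> h (\<beta> ^ k)"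
    using assms(2) unfolding Gamma_def by auto
  show "\<forall>j::nat. ereal_of_enat (KS u) \<le> efloor (FF u j h \<beta>)"
  proof
    fix j
    show "ereal_of_enat (KS u) \<le> efloor (FF u j h \<beta>)"
    proof (cases "j \<in> SS u h")
      case False
      thus ?thesis unfolding FF_def efloor_def by simp
    next
      case True
      define F where "F = ln (hinv01 h (u j)) / ln \<beta>"
      have P: "F \<ge> j" "nat \<lfloor>F\<rfloor> \<in> DeltaS u"
        using part1[OF assms True] unfolding F_def by auto
      have "KS u \<le> enat (nat \<lfloor>F\<rfloor>)" unfolding KS_def using P by (auto intro: Inf_lower)
      hence "ereal_of_enat (KS u) \<le> ereal_of_enat (enat (nat \<lfloor>F\<rfloor>))"
        by (simp only: ereal_of_enat_le_iff)
      also have "\<dots> = ereal (of_int \<lfloor>F\<rfloor>)" using P(1) by simp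
      also have "\<dots> = efloor (FF u j h \<beta>)"
        unfolding FF_def efloor_def F_def using True assms(2) by simp
      finally show ?thesis .
    qed
  qed
  show "SS u h \<noteq> {} \<longrightarrow>
            (\<exists>k. KS u = enat k \<and>
               (\<exists>m\<in>SS u h. FF u m h \<beta> = FF u k h \<beta> \<and> (\<forall>j\<in>SS u h. FF u m h \<beta> \<le> FF u j h \<beta>)))"
  proof
    assume "SS u h \<noteq> {}"
    then obtain j0 where j0: "j0 \<in> SS u h" by auto
    have ne: "DeltaS u \<noteq> {}" using part1[OF assms j0] by auto
    define k where "k = (LEAST k. k \<in> DeltaS u)"
    have KS: "KS u = enat k" unfolding k_def by (rule KS_least[OF ne refl])
    have kD: "k \<in> DeltaS u" unfolding k_def using ne by (auto intro: LeastI)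
    have all: "\<forall>j. u j \<le> u k"
      by (rule part2[OF assms(1) kD]) (simp add: k_def Least_le)
    have kS: "k \<in> SS u h" using all j0 unfolding SS_def using less_le_trans by blast
    have bk: "0 < \<beta>^k" "\<beta>^k \<le> 1" using b by (auto intro: power_le_one)
    have lnb: "ln \<beta> < 0" using b by simp
    have le: "FF u k h \<beta> \<le> FF u j h \<beta>" if jS: "j \<in> SS u h" for j
    proof -
      have bj: "0 < \<beta>^j" "\<beta>^j \<le> 1" using b by (auto intro: power_le_one)
      have uj: "h 0 < u j" and uk: "h 0 < u k" using jS kS unfolding SS_def by auto
      have m: "hinv01 h (u j) \<le> hinv01 h (u k)"
        by (rule hinv_mono[OF h bj bk uj ub uk ub]) (use all in auto)
      have pj: "0 < hinv01 h (u j)" using hinv_props[OF h bj uj ub[of j]] by auto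
      have "ln (hinv01 h (u j)) \<le> ln (hinv01 h (u k))" using m pj by simp
      hence "ln (hinv01 h (u k)) / ln \<beta> \<le> ln (hinv01 h (u j)) / ln \<beta>"
        using lnb by (intro divide_right_mono_neg) auto
      thus ?thesis unfolding FF_def using jS kS assms(2) by simp
    qed
    show "\<exists>k. KS u = enat k \<and>
               (\<exists>m\<in>SS u h. FF u m h \<beta> = FF u k h \<beta> \<and> (\<forall>j\<in>SS u h. FF u m h \<beta> \<le> FF u j h \<beta>))"
      using KS kS le by blast
  qed
qed

end
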